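(* Let $K$ be a field and let $f\colon R\to S$ be a morphism of Zinbiel algebras over $K$. For $i=1,2$, the maps $d^i_f\colon C^i_{\mathrm{Zinb}}(f,f)\to C^{i+1}_{\mathrm{Zinb}}(f,f)$ defined below satisfy $d^{i+1}_f\circ d^i_f=0$.
   Context: A Zinbiel algebra (dual Leibniz algebra) over $K$ is a $K$-vector space $R$ with a $K$-bilinear product $(x,y)\mapsto x\cdot y$ satisfying $(x\cdot y)\cdot z = x\cdot(y\cdot z)+x\cdot(z\cdot y)$ for all $x,y,z\in R$. A morphism $f\colon R\to S$ is a $K$-linear map with $f(x\cdot y)=f(x)\cdot f(y)$. An $R$-bimodule is a $K$-vector space $A$ with bilinear maps $R\otimes A\to A$, $A\otimes R\to A$ such that the Zinbiel identity holds whenever exactly one of $x,y,z$ lies in $A$ and the others in $R$. $R$ is an $R$-bimodule via its product, $S$ is an $S$-bimodule via its product, and $S$ is an $R$-bimodule via $r\cdot s=f(r)\cdot s$, $s\cdot r=s\cdot f(r)$. For an $R$-bimodule $A$ and $1\le n\le 4$ put $C^n_{\mathrm{Zinb}}(R,A)=\mathrm{Hom}_K(R^{\otimes n},A)$, and define $d^i\colon C^i_{\mathrm{Zinb}}(R,A)\to C^{i+1}_{\mathrm{Zinb}}(R,A)$ for $i=1,2,3$ by $(d^1\varphi)(x,y)=x\cdot\varphi(y)-\varphi(x\cdot y)+\varphi(x)\cdot y$, $(d^2\varphi)(x,y,z)=x\cdot(\varphi(y,z)+\varphi(z,y))-\varphi(x\cdot y,z)+\varphi(x,y\cdot z+z\cdot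 y)-\varphi(x,y)\cdot z$, $(d^3\varphi)(x,y,z,w)=x\cdot\{\varphi(y,z,w)-\varphi(z,w,y)+\varphi(z,y,w)-\varphi(w,z,y)\}-\varphi(x\cdot y,z,w)+\varphi(x,y\cdot z+z\cdot y,w)-\varphi(x,y,z\cdot w+w\cdot z)+\varphi(x,y,z)\cdot w$. Set $C^0_{\mathrm{Zinb}}(R,S)=0$ and $d^0=0$. For $1\le n\le 4$ let $C^n_{\mathrm{Zinb}}(f,f)=C^n_{\mathrm{Zinb}}(R,R)\times C^n_{\mathrm{Zinb}}(S,S)\times C^{n-1}_{\mathrm{Zinb}}(R,S)$ and for $1\le i\le 3$ define $d^i_f(\xi;\pi;\varphi)=(d^i\xi;\,d^i\pi;\,f\xi-\pi f-d^{i-1}\varphi)$, where $(f\xi)(x_1,\dots,x_i)=f(\xi(x_1,\dots,x_i))$ and $(\pi f)(x_1,\dots,x_i)=\pi(f(x_1),\dots,f(x_i))$ for $x_j\in R$, and $d^{i-1}\varphi$ is computed in $C^*_{\mathrm{Zinb}}(R,S)$ with $S$ an $R$-bimodule via $f$. *)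

theory Defs
  imports Complex_Main
begin

text \<open>Hom_K(V^{\<otimes>n}, A) is identified with K-multilinear maps V^n \<rightarrow> A (curried).\<close>

definition bilin :: "('k::field \<Rightarrow> 'a::ab_group_add \<Rightarrow> 'a) \<Rightarrow> ('k \<Rightarrow> 'b::ab_group_add \<Rightarrow> 'b)
    \<Rightarrow> ('k \<Rightarrow> 'c::ab_group_add \<Rightarrow> 'c) \<Rightarrow> ('a \<Rightarrow> 'b \<Rightarrow> 'c) \<Rightarrow> bool" where
  "bilin s1 s2 s3 g \<longleftrightarrow> (\<forall>x. Vector_Spaces.linear s2 s3 (g x))
                          \<and> (\<forall>y. Vector_Spaces.linear s1 s3 (\<lambda>x. g x y))"

definition zinbiel_algebra :: "('k::field \<Rightarrow> 'r::ab_group_add \<Rightarrow> 'r) \<Rightarrow> ('r \<Rightarrow> 'r \<Rightarrow> 'r) \<Rightarrow> bool" where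
  "zinbiel_algebra sc m \<longleftrightarrow> vector_space sc \<and> bilin sc sc sc m
     \<and> (\<forall>x y z. m (m x y) z = m x (m y z) + m x (m z y))"

definition zinbiel_morphism :: "('k::field \<Rightarrow> 'r::ab_group_add \<Rightarrow> 'r) \<Rightarrow> ('r \<Rightarrow> 'r \<Rightarrow> 'r)
    \<Rightarrow> ('k \<Rightarrow> 's::ab_group_add \<Rightarrow> 's) \<Rightarrow> ('s \<Rightarrow> 's \<Rightarrow> 's) \<Rightarrow> ('r \<Rightarrow> 's) \<Rightarrow> bool" where
  "zinbiel_morphism scR mR scS mS f \<longleftrightarrow> Vector_Spaces.linear scR scS f
     \<and> (\<forall>x y. f (mR x y) = mS (f x) (f y))"

text \<open>Zinbiel coboundaries with coefficients in a bimodule A given by the product m on R,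
  left action l :: R \<Rightarrow> A \<Rightarrow> A and right action r :: A \<Rightarrow> R \<Rightarrow> A.\<close>

definition zd1 :: "('r \<Rightarrow> 'r \<Rightarrow> 'r) \<Rightarrow> ('r \<Rightarrow> 'a \<Rightarrow> 'a) \<Rightarrow> ('a \<Rightarrow> 'r \<Rightarrow> 'a)
    \<Rightarrow> ('r \<Rightarrow> 'a::ab_group_add) \<Rightarrow> ('r \<Rightarrow> 'r \<Rightarrow> 'a)" where
  "zd1 m l r \<phi> = (\<lambda>x y. l x (\<phi> y) - \<phi> (m x y) + r (\<phi> x) y)"

definition zd2 :: "('r::ab_group_add \<Rightarrow> 'r \<Rightarrow> 'r) \<Rightarrow> ('r \<Rightarrow> 'a \<Rightarrow> 'a) \<Rightarrow> ('a \<Rightarrow> 'r \<Rightarrow> 'a)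
    \<Rightarrow> ('r \<Rightarrow> 'r \<Rightarrow> 'a::ab_group_add) \<Rightarrow> ('r \<Rightarrow> 'r \<Rightarrow> 'r \<Rightarrow> 'a)" where
  "zd2 m l r \<phi> = (\<lambda>x y z. l x (\<phi> y z + \<phi> z y) - \<phi> (m x y) z
                     + \<phi> x (m y z + m z y) - r (\<phi> x y) z)"

definition zd3 :: "('r::ab_group_add \<Rightarrow> 'r \<Rightarrow> 'r) \<Rightarrow> ('r \<Rightarrow> 'a \<Rightarrow> 'a) \<Rightarrow> ('a \<Rightarrow> 'r \<Rightarrow> 'a)
    \<Rightarrow> ('r \<Rightarrow> 'r \<Rightarrow> 'r \<Rightarrow> 'a::ab_group_add) \<Rightarrow> ('r \<Rightarrow> 'r \<Rightarrow> 'r \<Rightarrow> 'r \<Rightarrow> 'a)" where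
  "zd3 m l r \<phi> = (\<lambda>x y z w. l x (\<phi> y z w - \<phi> z w y + \<phi> z y w - \<phi> w z y)
                     - \<phi> (m x y) z w + \<phi> x (m y z + m z y) w
                     - \<phi> x y (m z w + m w z) + r (\<phi> x y z) w)"

text \<open>Elements of
  C^n(f,f) = C^n(R,R) \<times> C^n(S,S) \<times> C^{n-1}(R,S); C^0(R,S) = 0 is represented by unit,
  and d^0 = 0. S is an R-bimodule via f.\<close>

definition zdf1 :: "('r \<Rightarrow> 'r \<Rightarrow> 'r) \<Rightarrow> ('s \<Rightarrow> 's \<Rightarrow> 's) \<Rightarrow> ('r \<Rightarrow> 's)
    \<Rightarrow> ('r \<Rightarrow> 'r::ab_group_add) \<times> ('s \<Rightarrow> 's::ab_group_add) \<times> unit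
    \<Rightarrow> ('r \<Rightarrow> 'r \<Rightarrow> 'r) \<times> ('s \<Rightarrow> 's \<Rightarrow> 's) \<times> ('r \<Rightarrow> 's)" where
  "zdf1 mR mS f c = (case c of (\<xi>, \<pi>, _) \<Rightarrow>
     (zd1 mR mR mR \<xi>, zd1 mS mS mS \<pi>, \<lambda>x. f (\<xi> x) - \<pi> (f x) - 0))"

definition zdf2 :: "('r \<Rightarrow> 'r \<Rightarrow> 'r) \<Rightarrow> ('s \<Rightarrow> 's \<Rightarrow> 's) \<Rightarrow> ('r \<Rightarrow> 's)
    \<Rightarrow> ('r \<Rightarrow> 'r \<Rightarrow> 'r::ab_group_add) \<times> ('s \<Rightarrow> 's \<Rightarrow> 's::ab_group_add) \<times> ('r \<Rightarrow> 's)
    \<Rightarrow> ('r \<Rightarrow> 'r \<Rightarrow> 'r \<Rightarrow> 'r) \<times> ('s \<Rightarrow> 's \<Rightarrow> 's \<Rightarrow> 's) \<times> ('r \<Rightarrow> 'r \<Rightarrow> 's)" where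
  "zdf2 mR mS f c = (case c of (\<xi>, \<pi>, \<phi>) \<Rightarrow>
     (zd2 mR mR mR \<xi>, zd2 mS mS mS \<pi>,
      \<lambda>x y. f (\<xi> x y) - \<pi> (f x) (f y)
             - zd1 mR (\<lambda>a s. mS (f a) s) (\<lambda>s a. mS s (f a)) \<phi> x y))"

definition zdf3 :: "('r \<Rightarrow> 'r \<Rightarrow> 'r) \<Rightarrow> ('s \<Rightarrow> 's \<Rightarrow> 's) \<Rightarrow> ('r \<Rightarrow> 's)
    \<Rightarrow> ('r \<Rightarrow> 'r \<Rightarrow> 'r \<Rightarrow> 'r::ab_group_add) \<times> ('s \<Rightarrow> 's \<Rightarrow> 's \<Rightarrow> 's::ab_group_add) \<times> ('r \<Rightarrow> 'r \<Rightarrow> 's)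
    \<Rightarrow> ('r \<Rightarrow> 'r \<Rightarrow> 'r \<Rightarrow> 'r \<Rightarrow> 'r) \<times> ('s \<Rightarrow> 's \<Rightarrow> 's \<Rightarrow> 's \<Rightarrow> 's) \<times> ('r \<Rightarrow> 'r \<Rightarrow> 'r \<Rightarrow> 's)" where
  "zdf3 mR mS f c = (case c of (\<xi>, \<pi>, \<phi>) \<Rightarrow>
     (zd3 mR mR mR \<xi>, zd3 mS mS mS \<pi>,
      \<lambda>x y z. f (\<xi> x y z) - \<pi> (f x) (f y) (f z)
             - zd2 mR (\<lambda>a s. mS (f a) s) (\<lambda>s a. mS s (f a)) \<phi> x y z))"

end

theory Submission
  imports Defs
begin

lemma additive_rules:
  fixes g :: "'a::ab_group_add \<Rightarrow> 'b::ab_group_add"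
  assumes "\<forall>x y. g (x + y) = g x + g y"
  shows "g (x + y) = g x + g y" "g (x - y) = g x - g y" "g (- x) = - g x" "g 0 = 0"
proof -
  have a: "\<And>x y. g (x + y) = g x + g y" using assms by blast
  show z: "g 0 = 0" using a[of 0 0] by simp
  show n: "g (- x) = - g x" using a[of x "-x"] z by (simp add: eq_neg_iff_add_eq_0 add.commute)
  show "g (x + y) = g x + g y" by (rule a)
  show "g (x - y) = g x - g y" using a[of x "-y"] a[of y "-y"] z
    by (metis diff_conv_add_uminus a add_diff_cancel_right')
qed

lemma lin_add: "Vector_Spaces.linear s1 s2 g \<Longrightarrow> \<forall>x y. g (x + y) = g x + g y"
  by (simp add: Vector_Spaces.linear_iff)

theorem lemma2p1:
  fixes scR :: "'k::field \<Rightarrow> 'r::ab_group_add \<Rightarrow> 'r"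
    and scS :: "'k \<Rightarrow> 's::ab_group_add \<Rightarrow> 's"
    and mR :: "'r \<Rightarrow> 'r \<Rightarrow> 'r" and mS :: "'s \<Rightarrow> 's \<Rightarrow> 's" and f :: "'r \<Rightarrow> 's"
  assumes R: "zinbiel_algebra scR mR"
    and S: "zinbiel_algebra scS mS"
    and hf: "zinbiel_morphism scR mR scS mS f"
  shows "(\<forall>\<xi> \<pi> u. Vector_Spaces.linear scR scR \<xi> \<and> Vector_Spaces.linear scS scS \<pi> \<longrightarrow>
            zdf2 mR mS f (zdf1 mR mS f (\<xi>, \<pi>, u))
              = ((\<lambda>x y z. 0), (\<lambda>x y z. 0), (\<lambda>x y. 0)))
       \<and> (\<forall>\<xi> \<pi> \<phi>. bilin scR scR scR \<xi> \<and> bilin scS scS scS \<pi> \<and> Vector_Spaces.linear scR scS \<phi> \<longrightarrow>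
            zdf3 mR mS f (zdf2 mR mS f (\<xi>, \<pi>, \<phi>))
              = ((\<lambda>x y z w. 0), (\<lambda>x y z w. 0), (\<lambda>x y z. 0)))"
proof -
  have zR: "\<And>x y z. mR (mR x y) z = mR x (mR y z) + mR x (mR z y)"
    using R by (simp add: zinbiel_algebra_def)
  have zS: "\<And>x y z. mS (mS x y) z = mS x (mS y z) + mS x (mS z y)"
    using S by (simp add: zinbiel_algebra_def)
  have fm: "\<And>x y. f (mR x y) = mS (f x) (f y)" using hf by (simp add: zinbiel_morphism_def)
  have fa: "\<forall>x y. f (x + y) = f x + f y" using hf lin_add unfolding zinbiel_morphism_def by blast
  have mR1: "\<And>a. \<forall>x y. mR a (x + y) = mR a x + mR a y" by (intro lin_add[of scR scR]) (use R in \<open>simp add: zinbiel_algebra_def bilin_def\<close>)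
  have mR2: "\<And>a. \<forall>x y. mR (x + y) a = mR x a + mR y a" by (intro lin_add[of scR scR]) (use R in \<open>simp add: zinbiel_algebra_def bilin_def\<close>)
  have mS1: "\<And>a. \<forall>x y. mS a (x + y) = mS a x + mS a y" by (intro lin_add[of scS scS]) (use S in \<open>simp add: zinbiel_algebra_def bilin_def\<close>)
  have mS2: "\<And>a. \<forall>x y. mS (x + y) a = mS x a + mS y a" by (intro lin_add[of scS scS]) (use S in \<open>simp add: zinbiel_algebra_def bilin_def\<close>)
  note rules = additive_rules[OF fa] additive_rules[OF mR1] additive_rules[OF mR2]
    additive_rules[OF mS1] additive_rules[OF mS2]
  show ?thesis
  proof (intro conjI allI impI)
    fix \<xi> :: "'r \<Rightarrow> 'r" and \<pi> :: "'s \<Rightarrow> 's" and u :: unit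
    assume h: "Vector_Spaces.linear scR scR \<xi> \<and> Vector_Spaces.linear scS scS \<pi>"
    note r2 = additive_rules[OF lin_add[OF h[THEN conjunct1]]]
       additive_rules[OF lin_add[OF h[THEN conjunct2]]]
    show "zdf2 mR mS f (zdf1 mR mS f (\<xi>, \<pi>, u)) = ((\<lambda>x y z. 0), (\<lambda>x y z. 0), (\<lambda>x y. 0))"
      by (simp add: zdf1_def zdf2_def zd1_def zd2_def fun_eq_iff rules r2 zR zS fm algebra_simps)
  next
    fix \<xi> :: "'r \<Rightarrow> 'r \<Rightarrow> 'r" and \<pi> :: "'s \<Rightarrow> 's \<Rightarrow> 's" and \<phi> :: "'r \<Rightarrow> 's"
    assume h: "bilin scR scR scR \<xi> \<and> bilin scS scS scS \<pi> \<and> Vector_Spaces.linear scR scS \<phi>"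
    have x1: "\<And>a. \<forall>x y. \<xi> a (x + y) = \<xi> a x + \<xi> a y" by (intro lin_add[of scR scR]) (use h in \<open>simp add: bilin_def\<close>)
    have x2: "\<And>a. \<forall>x y. \<xi> (x + y) a = \<xi> x a + \<xi> y a" by (intro lin_add[of scR scR]) (use h in \<open>simp add: bilin_def\<close>)
    have p1: "\<And>a. \<forall>x y. \<pi> a (x + y) = \<pi> a x + \<pi> a y" by (intro lin_add[of scS scS]) (use h in \<open>simp add: bilin_def\<close>)
    have p2: "\<And>a. \<forall>x y. \<pi> (x + y) a = \<pi> x a + \<pi> y a" by (intro lin_add[of scS scS]) (use h in \<open>simp add: bilin_def\<close>)
    have ph: "\<forall>x y. \<phi> (x + y) = \<phi> x + \<phi> y" by (intro lin_add[of scR scS]) (use h in simp)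
    note r2 = additive_rules[OF x1] additive_rules[OF x2] additive_rules[OF p1]
      additive_rules[OF p2] additive_rules[OF ph]
    show "zdf3 mR mS f (zdf2 mR mS f (\<xi>, \<pi>, \<phi>)) = ((\<lambda>x y z w. 0), (\<lambda>x y z w. 0), (\<lambda>x y z. 0))"
      by (simp add: zdf3_def zdf2_def zd1_def zd2_def zd3_def fun_eq_iff rules r2 zR zS fm algebra_simps)
  qed
qed

end
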